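(* Let $V\subset\mathcal{A}_0$ be compact and let $V^T$ be complete. Then for every continuous linear functional $\lambda$ on $\mathcal{A}$, with $\lambda:=g$, $$\lambda(V)=\bigcup_{f\in\mathrm{bor}(V)}(f*g)(\overline D),\qquad \partial\lambda(V)\subset\bigcup_{f\in\mathrm{bor}(V)}(f*g)(\partial D).$$
   Context: $D=\{z:|z|<1\}$, $\overline D$ its closure, $\partial D$ the unit circle. $\mathcal{A}$ is the space of functions $f(z)=\sum_{k\ge0}a_k(f)z^k$ analytic in $D$, with the topology of locally uniform convergence; $\mathcal{A}_0=\{f\in\mathcal{A}: a_0(f)=1\}$. $\mathcal{A}(\overline D)$ is the set of functions analytic in some disk $\{|z|<R\}$ with $R>1$, and $\mathcal{A}_0(\overline D)=\{g\in\mathcal{A}(\overline D):a_0(g)=1\}$. The Hadamard product is $(f*g)(z)=\sum_{k\ge0}a_k(f)a_k(g)z^k$. Every continuous linear functional $\lambda$ on $\mathcal{A}$ has the form $\lambda(f)=(f*g)(1)$ for a function $g\in\mathcal{A}(\overline D)$; this is written $\lambda:=g$. $V^T=\{g\in\mathcal{A}_0(\overline D): (f*g)(1)\ne0 \ \forall f\in V\}$. For $x\in\overline D$, $(P_xf)(z)=f(xz)$; a set $W$ is complete if $P_xf\in W$ for all $f\in W$, $x\in\overline D$. Let $e\equiv1$. If $V\ne\{e\}$, an element $f\in V$ is a border element of $V$ if whenever $f=P_xg$ with $g\in V$, $x\in\overline D$, then $|x|=1$; $\mathrm{bor}(V)$ is the set of border elements. If $V=\{e\}$, $\mathrm{bor}(V)=\{e\}$.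 *)

theory Defs
  imports "HOL-Analysis.Analysis"
begin

text \<open>Elements of the space A are represented as functions holomorphic on the unit
  disk D = ball 0 1, normalised to be 0 outside D (so that HOL equality of functions
  is equality on D).\<close>

definition anA :: "(complex \<Rightarrow> complex) set" where
  "anA = {f. f holomorphic_on ball 0 1 \<and> (\<forall>z. z \<notin> ball 0 1 \<longrightarrow> f z = 0)}"

definition tcoeff :: "(complex \<Rightarrow> complex) \<Rightarrow> nat \<Rightarrow> complex" where
  "tcoeff f k = (deriv ^^ k) f 0 / of_nat (fact k)"

definition anA0 :: "(complex \<Rightarrow> complex) set" where
  "anA0 = {f \<in> anA. tcoeff f 0 = 1}"

text \<open>A(closed D): functions analytic in some disk of radius R > 1.\<close>
definition anAc :: "(complex \<Rightarrow> complex) set" where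
  "anAc = {g. \<exists>R>1. g holomorphic_on ball 0 R}"

definition anAc0 :: "(complex \<Rightarrow> complex) set" where
  "anAc0 = {g \<in> anAc. tcoeff g 0 = 1}"

definition hadamard :: "(complex \<Rightarrow> complex) \<Rightarrow> (complex \<Rightarrow> complex) \<Rightarrow> complex \<Rightarrow> complex" where
  "hadamard f g z = (\<Sum>k. tcoeff f k * tcoeff g k * z ^ k)"

definition dualT :: "(complex \<Rightarrow> complex) set \<Rightarrow> (complex \<Rightarrow> complex) set" where
  "dualT V = {g \<in> anAc0. \<forall>f\<in>V. hadamard f g 1 \<noteq> 0}"

definition Pop :: "complex \<Rightarrow> (complex \<Rightarrow> complex) \<Rightarrow> complex \<Rightarrow> complex" where
  "Pop x f = (\<lambda>z. if z \<in> ball 0 1 then f (x * z) else 0)"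

text \<open>Completeness of a set W of elements of A(closed D) (here P_x g is just z \<mapsto> g(x z)).\<close>
definition complete_Ac :: "(complex \<Rightarrow> complex) set \<Rightarrow> bool" where
  "complete_Ac W \<longleftrightarrow> (\<forall>g\<in>W. \<forall>x\<in>cball 0 1. (\<lambda>z. g (x * z)) \<in> W)"

definition eA :: "complex \<Rightarrow> complex" where
  "eA = (\<lambda>z. if z \<in> ball 0 1 then 1 else 0)"

definition bor :: "(complex \<Rightarrow> complex) set \<Rightarrow> (complex \<Rightarrow> complex) set" where
  "bor V = (if V = {eA} then {eA}
            else {f \<in> V. \<forall>g\<in>V. \<forall>x\<in>cball 0 1. f = Pop x g \<longrightarrow> cmod x = 1})"

text \<open>Compactness in the topology of locally uniform convergence on D (a metrizable
  topology, so compactness = sequential compactness).\<close>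
definition lu_compact :: "(complex \<Rightarrow> complex) set \<Rightarrow> bool" where
  "lu_compact V \<longleftrightarrow> (\<forall>F::nat \<Rightarrow> complex \<Rightarrow> complex. (\<forall>n. F n \<in> V) \<longrightarrow>
     (\<exists>l\<in>V. \<exists>r. strict_mono r \<and>
        (\<forall>K. compact K \<and> K \<subseteq> ball 0 1 \<longrightarrow> uniform_limit K (F \<circ> r) l sequentially)))"

end

theory Submission
  imports Defs "HOL-Complex_Analysis.Complex_Analysis"
begin

lemma tcoeff_0: "tcoeff f 0 = f 0" by (simp add: tcoeff_def)

lemma mult_ball: "cmod x \<le> 1 \<Longrightarrow> z \<in> ball 0 r \<Longrightarrow> x * z \<in> ball 0 r"
proof -
  assume a: "cmod x \<le> 1" "z \<in> ball 0 r"
  have "cmod (x*z) \<le> cmod z" unfolding norm_mult using a(1)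
    by (simp add: mult_left_le_one_le)
  then show ?thesis using a(2) by simp
qed

lemma compose_holo:
  assumes "h holomorphic_on ball 0 R" "cmod x \<le> 1"
  shows "(\<lambda>z. h (x*z)) holomorphic_on ball 0 R"
proof -
  have "(\<lambda>z. x*z) ` ball 0 R \<subseteq> ball 0 R" using mult_ball[OF assms(2)] by auto
  then have "h holomorphic_on (\<lambda>z. x*z) ` ball 0 R" using assms(1) holomorphic_on_subset by blast
  then have "(h \<circ> (\<lambda>z. x*z)) holomorphic_on ball 0 R"
    by (intro holomorphic_on_compose holomorphic_intros)
  then show ?thesis by (simp add: o_def)
qed

lemma tcoeff_compose:
  assumes "h holomorphic_on ball 0 R" "cmod x \<le> 1" "0 < R"
  shows "tcoeff (\<lambda>z. h (x*z)) k = x^k * tcoeff h k"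
proof -
  have "(deriv ^^ k) (\<lambda>z. h (x*z)) 0 = x^k * (deriv ^^ k) h (x*0)"
    by (rule higher_deriv_compose_linear[OF assms(1), where S="ball 0 R"]) (use assms mult_ball in auto)
  then show ?thesis by (simp add: tcoeff_def)
qed

lemma Pop_holo:
  assumes "f holomorphic_on ball 0 1" "cmod x \<le> 1"
  shows "Pop x f holomorphic_on ball 0 1"
  by (rule holomorphic_transform[OF compose_holo[OF assms]]) (simp add: Pop_def)

lemma Pop_anA: "f \<in> anA \<Longrightarrow> cmod x \<le> 1 \<Longrightarrow> Pop x f \<in> anA"
  using Pop_holo by (auto simp: anA_def Pop_def)

lemma tcoeff_Pop:
  assumes "f holomorphic_on ball 0 1" "cmod x \<le> 1"
  shows "tcoeff (Pop x f) k = x^k * tcoeff f k"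
proof -
  have "(deriv ^^ k) (Pop x f) 0 = (deriv ^^ k) (\<lambda>z. f (x*z)) 0"
    by (rule higher_deriv_transform_within_open[OF Pop_holo[OF assms] compose_holo[OF assms]])
       (auto simp: Pop_def)
  then show ?thesis using tcoeff_compose[OF assms, of k] by (simp add: tcoeff_def)
qed

lemma Pop_Pop: "cmod x \<le> 1 \<Longrightarrow> Pop x (Pop y h) = Pop (x*y) h"
  using mult_ball[of x _ 1] by (auto simp: Pop_def fun_eq_iff mult_ac)

lemma Pop_1: "f \<in> anA \<Longrightarrow> Pop 1 f = f"
  by (auto simp: Pop_def anA_def fun_eq_iff)

lemma Pop_0: "f \<in> anA0 \<Longrightarrow> Pop 0 f = eA"
  by (auto simp: Pop_def anA0_def eA_def fun_eq_iff tcoeff_0)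

lemma eA_anA0: "eA \<in> anA0"
proof -
  have "eA holomorphic_on ball 0 1"
    by (rule holomorphic_transform[OF holomorphic_on_const]) (auto simp: eA_def)
  then show ?thesis by (auto simp: anA0_def anA_def eA_def tcoeff_0)
qed

lemma hadamard_scale:
  assumes "\<And>k. tcoeff F k = x^k * tcoeff f k"
  shows "hadamard F g 1 = hadamard f g x"
  unfolding hadamard_def assms by (simp add: mult_ac)

lemma hadamard_scale2:
  assumes "\<And>k. tcoeff G k = x^k * tcoeff g k"
  shows "hadamard f G 1 = hadamard f g x"
  unfolding hadamard_def assms by (simp add: mult_ac)

lemma hadamard_Pop:
  assumes "f \<in> anA" "cmod x \<le> 1"
  shows "hadamard (Pop x f) g 1 = hadamard f g x"
  by (rule hadamard_scale, rule tcoeff_Pop) (use assms in \<open>auto simp: anA_def\<close>)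

lemma cauchy_coeff:
  assumes "f holomorphic_on ball 0 r0" "0 < \<rho>" "\<rho> < r0" "\<And>z. cmod z = \<rho> \<Longrightarrow> cmod (f z) \<le> B"
  shows "cmod (tcoeff f k) \<le> B / \<rho>^k"
proof -
  have "cmod ((deriv ^^ k) f 0) \<le> fact k * B / \<rho>^k"
  proof (rule Cauchy_inequality)
    show "f holomorphic_on ball 0 \<rho>" using assms(1,3) holomorphic_on_subset by fastforce
    have "cball 0 \<rho> \<subseteq> ball (0::complex) r0" using assms(3) by auto
    then show "continuous_on (cball 0 \<rho>) f"
      by (rule holomorphic_on_imp_continuous_on[OF holomorphic_on_subset[OF assms(1)]])
  qed (use assms in auto)
  then show ?thesis
    by (simp add: tcoeff_def norm_divide field_simps)
qed

lemma sphere_bound: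
  assumes "f holomorphic_on ball 0 r0" "0 \<le> \<rho>" "\<rho> < r0"
  shows "\<exists>B. \<forall>z. cmod z = \<rho> \<longrightarrow> cmod (f z) \<le> B"
proof -
  have "sphere 0 \<rho> \<subseteq> ball (0::complex) r0" using assms(3) by auto
  then have "continuous_on (sphere 0 \<rho>) f"
    by (rule holomorphic_on_imp_continuous_on[OF holomorphic_on_subset[OF assms(1)]])
  then have "compact (f ` sphere 0 \<rho>)" by (simp add: compact_continuous_image)
  then obtain B where "\<forall>y\<in>f ` sphere 0 \<rho>. norm y \<le> B"
    using compact_imp_bounded bounded_iff by metis
  then have "\<forall>z. cmod z = \<rho> \<longrightarrow> cmod (f z) \<le> B" by (auto simp: mem_sphere_0)
  then show ?thesis by blast
qed

lemma g_coeffs: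
  assumes "g \<in> anAc"
  shows "\<exists>\<rho> r1 C. 0 < \<rho> \<and> \<rho> < 1 \<and> 1 < \<rho> * r1 \<and> 0 < r1 \<and> 0 \<le> C \<and>
     (\<forall>k. cmod (tcoeff g k) \<le> C / r1^k)"
proof -
  obtain R where R: "R > 1" "g holomorphic_on ball 0 R" using assms by (auto simp: anAc_def)
  define r1 where "r1 = (1+R)/2"
  have r1: "1 < r1" "r1 < R" using R by (auto simp: r1_def)
  obtain B where B: "\<forall>z. cmod z = r1 \<longrightarrow> cmod (g z) \<le> B"
    using sphere_bound[OF R(2), of r1] r1 by auto
  have "cmod (tcoeff g k) \<le> \<bar>B\<bar> / r1^k" for k
  proof -
    have "cmod (tcoeff g k) \<le> B / r1^k"
      by (rule cauchy_coeff[OF R(2)]) (use r1 B in auto)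
    also have "\<dots> \<le> \<bar>B\<bar> / r1^k" using r1 by (intro divide_right_mono) auto
    finally show ?thesis .
  qed
  moreover define \<rho> where "\<rho> = (1 + 1/r1)/2"
  moreover have "0 < \<rho>" "\<rho> < 1" using r1 by (auto simp: \<rho>_def field_simps)
  moreover have "1 < \<rho> * r1" using r1 by (auto simp: \<rho>_def field_simps)
  ultimately show ?thesis using r1 by (intro exI[of _ \<rho>] exI[of _ r1] exI[of _ "\<bar>B\<bar>"]) auto
qed

lemma term_bound:
  assumes "cmod a \<le> B / \<rho>^k" "cmod b \<le> C / r1^k" "0 < \<rho>" "0 < r1"
  shows "cmod (a * b * w^k) \<le> B * C * (cmod w / (\<rho> * r1))^k"
proof -
  have "cmod (a * b * w^k) = cmod a * cmod b * cmod w ^ k" by (simp add: norm_mult norm_power)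
  also have "\<dots> \<le> (B / \<rho>^k) * (C / r1^k) * cmod w ^ k"
  proof (rule mult_right_mono[OF mult_mono[OF assms(1,2)]])
    show "0 \<le> B / \<rho>^k" using assms(1) norm_ge_zero[of a] by linarith
  qed auto
  also have "\<dots> = B * C * (cmod w / (\<rho> * r1))^k"
    by (simp add: power_divide power_mult_distrib)
  finally show ?thesis .
qed

lemma had_sums:
  assumes "f holomorphic_on ball 0 1" "g \<in> anAc"
  shows "\<exists>Q>1. \<forall>w. cmod w < Q \<longrightarrow> (\<lambda>k. tcoeff f k * tcoeff g k * w^k) sums hadamard f g w"
proof -
  obtain \<rho> r1 C where c: "0 < \<rho>" "\<rho> < 1" "1 < \<rho> * r1" "0 < r1" "0 \<le> C"
     "\<And>k. cmod (tcoeff g k) \<le> C / r1^k"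
    using g_coeffs[OF assms(2)] by blast
  obtain B where B: "\<forall>z. cmod z = \<rho> \<longrightarrow> cmod (f z) \<le> B"
    using sphere_bound[OF assms(1), of \<rho>] c by auto
  have cf: "cmod (tcoeff f k) \<le> B / \<rho>^k" for k
    by (rule cauchy_coeff[OF assms(1)]) (use c B in auto)
  have "(\<lambda>k. tcoeff f k * tcoeff g k * w^k) sums hadamard f g w" if w: "cmod w < \<rho> * r1" for w
  proof -
    have "summable (\<lambda>k. B * C * (cmod w / (\<rho> * r1))^k)"
      using w c by (intro summable_mult summable_geometric) auto
    then have "summable (\<lambda>k. tcoeff f k * tcoeff g k * w^k)"
      by (rule summable_comparison_test[rotated]) (use term_bound[OF cf c(6) c(1) c(4)] in auto)
    then show ?thesis by (simp add: hadamard_def summable_sums)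
  qed
  then show ?thesis using c(3) by blast
qed

lemma had_holo:
  assumes "f holomorphic_on ball 0 1" "g \<in> anAc"
  shows "\<exists>Q>1. hadamard f g holomorphic_on ball 0 Q"
proof -
  obtain Q where Q: "Q > 1" "\<And>w. cmod w < Q \<Longrightarrow> (\<lambda>k. tcoeff f k * tcoeff g k * w^k) sums hadamard f g w"
    using had_sums[OF assms] by blast
  have "hadamard f g holomorphic_on ball 0 Q"
    by (rule power_series_holomorphic[where a="\<lambda>k. tcoeff f k * tcoeff g k"]) (use Q in auto)
  then show ?thesis using Q by blast
qed

lemma had_cont:
  assumes "f holomorphic_on ball 0 1" "g \<in> anAc"
  shows "continuous_on (cball 0 1) (hadamard f g)" "hadamard f g holomorphic_on ball 0 1"
proof -
  obtain Q where Q: "Q > 1" "hadamard f g holomorphic_on ball 0 Q" using had_holo[OF assms] by blast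
  have "cball 0 1 \<subseteq> ball (0::complex) Q" "ball 0 1 \<subseteq> ball (0::complex) Q" using Q by auto
  then show "continuous_on (cball 0 1) (hadamard f g)" "hadamard f g holomorphic_on ball 0 1"
    using Q holomorphic_on_imp_continuous_on holomorphic_on_subset by blast+
qed

lemma had_zero:
  assumes "f holomorphic_on ball 0 1" "g \<in> anAc"
  shows "hadamard f g 0 = f 0 * g 0"
proof -
  have "(\<lambda>k. tcoeff f k * tcoeff g k * 0^k) = (\<lambda>k. if k = 0 then tcoeff f k * tcoeff g k else 0)"
    by auto
  then show ?thesis unfolding hadamard_def using sums_single[of 0 "\<lambda>k. tcoeff f k * tcoeff g k"]
    by (simp add: sums_iff tcoeff_0)
qed

lemma Lambda_cont:
  assumes g: "g \<in> anAc" and F: "\<And>n. F n holomorphic_on ball 0 1" and l: "l holomorphic_on ball 0 1"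
    and U: "\<And>K. compact K \<Longrightarrow> K \<subseteq> ball 0 1 \<Longrightarrow> uniform_limit K F l sequentially"
    and z: "cmod z \<le> 1"
  shows "(\<lambda>n. hadamard (F n) g z) \<longlonglongrightarrow> hadamard l g z"
proof -
  obtain \<rho> r1 C where c: "0 < \<rho>" "\<rho> < 1" "1 < \<rho> * r1" "0 < r1" "0 \<le> C"
     "\<And>k. cmod (tcoeff g k) \<le> C / r1^k"
    using g_coeffs[OF g] by blast
  define q where "q = 1/(\<rho>*r1)"
  have q: "0 < q" "q < 1" using c by (auto simp: q_def field_simps)
  define M where "M = C/(1-q)"
  have M: "0 \<le> M" using q c by (auto simp: M_def)
  have diff_sums: "(\<lambda>k. tcoeff (\<lambda>x. F n x - l x) k * tcoeff g k * z^k) sums (hadamard (F n) g z - hadamard l g z)" for n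
  proof -
    obtain Q1 where Q1: "Q1 > 1" "\<And>w. cmod w < Q1 \<Longrightarrow> (\<lambda>k. tcoeff (F n) k * tcoeff g k * w^k) sums hadamard (F n) g w"
      using had_sums[OF F g] by blast
    obtain Q2 where Q2: "Q2 > 1" "\<And>w. cmod w < Q2 \<Longrightarrow> (\<lambda>k. tcoeff l k * tcoeff g k * w^k) sums hadamard l g w"
      using had_sums[OF l g] by blast
    have "(\<lambda>k. tcoeff (F n) k * tcoeff g k * z^k - tcoeff l k * tcoeff g k * z^k) sums (hadamard (F n) g z - hadamard l g z)"
      by (rule sums_diff) (use z Q1 Q2 in auto)
    moreover have tcD: "tcoeff (\<lambda>x. F n x - l x) k = tcoeff (F n) k - tcoeff l k" for k
      unfolding tcoeff_def using higher_deriv_diff[OF F l open_ball, of 0 k]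
      by (simp add: diff_divide_distrib)
    moreover have "(\<lambda>k. tcoeff (\<lambda>x. F n x - l x) k * tcoeff g k * z^k) =
       (\<lambda>k. tcoeff (F n) k * tcoeff g k * z^k - tcoeff l k * tcoeff g k * z^k)"
      by (simp add: tcD left_diff_distrib)
    ultimately show ?thesis by simp
  qed
  show ?thesis
    unfolding tendsto_iff
  proof (intro allI impI)
    fix e :: real assume e: "0 < e"
    define d where "d = e/(M+1)"
    have d: "0 < d" using e M by (simp add: d_def)
    have "cball 0 \<rho> \<subseteq> ball (0::complex) 1" using c by auto
    then have "\<forall>\<^sub>F n in sequentially. \<forall>y\<in>cball 0 \<rho>. dist (F n y) (l y) < d"
      using U[of "cball 0 \<rho>"] d by (auto simp: uniform_limit_iff)
    then show "\<forall>\<^sub>F n in sequentially. dist (hadamard (F n) g z) (hadamard l g z) < e"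
    proof (rule eventually_mono)
      fix n assume n: "\<forall>y\<in>cball 0 \<rho>. dist (F n y) (l y) < d"
      have Dh: "(\<lambda>x. F n x - l x) holomorphic_on ball 0 1" using F l by (intro holomorphic_intros)
      have cD: "cmod (tcoeff (\<lambda>x. F n x - l x) k) \<le> d / \<rho>^k" for k
      proof (rule cauchy_coeff[OF Dh])
        fix y :: complex assume "cmod y = \<rho>"
        then show "cmod (F n y - l y) \<le> d" using n by (auto simp: dist_norm less_imp_le)
      qed (use c in auto)
      have tb: "cmod (tcoeff (\<lambda>x. F n x - l x) k * tcoeff g k * z^k) \<le> d * C * q^k" for k
      proof -
        have "cmod (tcoeff (\<lambda>x. F n x - l x) k * tcoeff g k * z^k) \<le> d * C * (cmod z / (\<rho> * r1))^k"
          by (rule term_bound[OF cD c(6) c(1) c(4)])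
        also have "\<dots> \<le> d * C * q^k"
          unfolding q_def using c d z
          by (intro mult_left_mono power_mono divide_right_mono) auto
        finally show ?thesis .
      qed
      have sg: "summable (\<lambda>k. d * C * q^k)" using q by (intro summable_mult summable_geometric) auto
      have "dist (hadamard (F n) g z) (hadamard l g z) = cmod (\<Sum>k. tcoeff (\<lambda>x. F n x - l x) k * tcoeff g k * z^k)"
        using diff_sums[of n] by (simp add: dist_norm sums_iff)
      also have "\<dots> \<le> (\<Sum>k. d * C * q^k)" by (rule norm_suminf_le[OF tb sg])
      also have "\<dots> = d * M"
        using q by (simp add: suminf_mult suminf_geometric M_def)
      also have "\<dots> < e" using e M by (simp add: d_def field_simps)
      finally show "dist (hadamard (F n) g z) (hadamard l g z) < e" .
    qed
  qed
qed

lemma had_compose: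
  assumes "h holomorphic_on ball 0 R" "0 < R" "cmod z \<le> 1"
  shows "hadamard f (\<lambda>\<zeta>. h (z * \<zeta>)) 1 = hadamard f h z"
  by (rule hadamard_scale2, rule tcoeff_compose[OF assms(1,3,2)])

lemma dual_elem:
  assumes g: "g \<in> anAc" and w: "w \<noteq> g 0"
  defines "h \<equiv> \<lambda>\<zeta>. (1/(g 0 - w)) * (g \<zeta> - w)"
  shows "h \<in> anAc0" "h holomorphic_on ball 0 (SOME R. R > 1 \<and> g holomorphic_on ball 0 R)"
    "\<And>f z. f holomorphic_on ball 0 1 \<Longrightarrow> cmod z \<le> 1 \<Longrightarrow>
      hadamard f h z = (1/(g 0 - w)) * (hadamard f g z - w * f 0)"
proof -
  define R where "R = (SOME R. R > 1 \<and> g holomorphic_on ball 0 R)"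
  have R: "R > 1" "g holomorphic_on ball 0 R"
    using someI_ex[of "\<lambda>R. R > 1 \<and> g holomorphic_on ball 0 R"] g by (auto simp: anAc_def R_def)
  define c where "c = 1/(g 0 - w)"
  have gw: "(\<lambda>\<zeta>. g \<zeta> - w) holomorphic_on ball 0 R" using R by (intro holomorphic_intros)
  show hh: "h holomorphic_on ball 0 (SOME R. R > 1 \<and> g holomorphic_on ball 0 R)"
    unfolding h_def R_def[symmetric] using gw R(2) by (intro holomorphic_intros)
  have tc: "tcoeff h k = c * (tcoeff g k - (if k = 0 then w else 0))" for k
  proof -
    have "(deriv ^^ k) h 0 = c * (deriv ^^ k) (\<lambda>\<zeta>. g \<zeta> - w) 0"
      unfolding h_def c_def by (rule higher_deriv_cmult[OF gw]) (use R in auto)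
    also have "(deriv ^^ k) (\<lambda>\<zeta>. g \<zeta> - w) 0 = (deriv ^^ k) g 0 - (deriv ^^ k) (\<lambda>\<zeta>. w) 0"
      by (rule higher_deriv_diff[OF R(2) holomorphic_on_const open_ball]) (use R in auto)
    finally show ?thesis by (cases "k = 0") (auto simp: tcoeff_def)
  qed
  show "h \<in> anAc0"
    using hh R w unfolding anAc0_def anAc_def R_def[symmetric]
    by (auto simp: tcoeff_0 h_def)
  fix f z assume f: "f holomorphic_on ball 0 1" and z: "cmod z \<le> 1"
  obtain Q where Q: "Q > 1" "\<And>w. cmod w < Q \<Longrightarrow> (\<lambda>k. tcoeff f k * tcoeff g k * w^k) sums hadamard f g w"
    using had_sums[OF f g] by blast
  have "(\<lambda>k. c * (tcoeff f k * tcoeff g k * z^k - (if k = 0 then tcoeff f k * w * z^k else 0)))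
      sums (c * (hadamard f g z - tcoeff f 0 * w * z^0))"
    by (intro sums_mult sums_diff Q(2) sums_single) (use z Q in auto)
  moreover have "(\<lambda>k. c * (tcoeff f k * tcoeff g k * z^k - (if k = 0 then tcoeff f k * w * z^k else 0)))
     = (\<lambda>k. tcoeff f k * tcoeff h k * z^k)"
    by (auto simp: tc fun_eq_iff algebra_simps)
  ultimately show "hadamard f h z = (1/(g 0 - w)) * (hadamard f g z - w * f 0)"
    by (simp add: hadamard_def sums_iff tcoeff_0 c_def mult_ac)
qed

lemma anA0_holo: "f \<in> anA0 \<Longrightarrow> f holomorphic_on ball 0 1"
  by (simp add: anA0_def anA_def)

lemma border_exists:
  assumes V: "V \<subseteq> anA0" and cpt: "lu_compact V" and f0: "f0 \<in> V" and ne: "f0 \<noteq> eA"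
  shows "\<exists>x. cmod x \<le> 1 \<and> (\<exists>f\<in>V. f0 = Pop x f \<and> (\<forall>h\<in>V. \<forall>y\<in>cball 0 1. f = Pop y h \<longrightarrow> cmod y = 1))"
proof -
  define S where "S = {x. cmod x \<le> 1 \<and> (\<exists>f\<in>V. f0 = Pop x f)}"
  have f0A: "f0 \<in> anA" using V f0 by (auto simp: anA0_def)
  have "1 \<in> S" unfolding S_def using Pop_1[OF f0A] f0 by (auto intro!: bexI[of _ f0])
  define m where "m = Inf (norm ` S)"
  have bdd: "bdd_below (norm ` S)" by (rule bdd_belowI[of _ 0]) auto
  have m_le: "m \<le> cmod s" if "s \<in> S" for s
    unfolding m_def using bdd that by (simp add: cInf_lower)
  have "\<exists>x\<in>S. cmod x < m + 1/Suc n" for n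
  proof -
    have "Inf (norm ` S) < m + 1/Suc n" by (simp add: m_def)
    then obtain y where "y \<in> norm ` S" "y < m + 1/Suc n"
      using cInf_lessD[of "norm ` S"] \<open>1 \<in> S\<close> by blast
    then show ?thesis by auto
  qed
  then have "\<forall>n. \<exists>x. x \<in> S \<and> cmod x < m + 1/Suc n" by blast
  then obtain xs where "\<forall>n. xs n \<in> S \<and> cmod (xs n) < m + 1/Suc n" by (rule choice_iff[THEN iffD1, elim_format]) blast
  then have xs: "\<And>n. xs n \<in> S" "\<And>n. cmod (xs n) < m + 1/Suc n" by auto
  then have "\<forall>n. \<exists>f. f \<in> V \<and> f0 = Pop (xs n) f" unfolding S_def by blast
  then obtain fs where "\<forall>n. fs n \<in> V \<and> f0 = Pop (xs n) (fs n)" by (rule choice_iff[THEN iffD1, elim_format]) blast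
  then have fs: "\<And>n. fs n \<in> V" "\<And>n. f0 = Pop (xs n) (fs n)" by auto
  have xs1: "xs n \<in> cball 0 1" for n using xs(1) by (auto simp: S_def)
  obtain x r1 where x: "x \<in> cball 0 1" "strict_mono r1" "(xs \<circ> r1) \<longlonglongrightarrow> x"
  proof -
    have "seq_compact (cball (0::complex) 1)" by (rule compact_imp_seq_compact[OF compact_cball])
    then have "\<exists>x\<in>cball 0 1. \<exists>r. strict_mono r \<and> (xs \<circ> r) \<longlonglongrightarrow> x"
      unfolding seq_compact_def using xs1 by blast
    then show ?thesis using that by blast
  qed
  obtain l r2 where l: "l \<in> V" "strict_mono r2"
    "\<And>K. compact K \<Longrightarrow> K \<subseteq> ball 0 1 \<Longrightarrow> uniform_limit K ((fs \<circ> r1) \<circ> r2) l sequentially"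
    using cpt[unfolded lu_compact_def, rule_format, of "fs \<circ> r1"] fs(1) by auto
  define r where "r = r1 \<circ> r2"
  have r: "strict_mono r" using x(2) l(2) by (simp add: r_def strict_mono_o)
  have xr: "(\<lambda>n. xs (r n)) \<longlonglongrightarrow> x"
    using LIMSEQ_subseq_LIMSEQ[OF x(3) l(2)] by (simp add: r_def o_def)
  have U: "uniform_limit K (\<lambda>n. fs (r n)) l sequentially" if "compact K" "K \<subseteq> ball 0 1" for K
    using l(3)[OF that] by (simp add: r_def o_def)
  have lhol: "l holomorphic_on ball 0 1" using l(1) V by (auto simp: anA0_def anA_def)
  have lA: "l \<in> anA0" using l(1) V by auto
  have nm: "(\<lambda>n. cmod (xs (r n))) \<longlonglongrightarrow> m"
  proof (rule tendsto_sandwich[of "\<lambda>n. m" _ _ "\<lambda>n. m + 1/Suc n"])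
    show "\<forall>\<^sub>F n in sequentially. m \<le> cmod (xs (r n))" using m_le xs(1) by auto
    have "cmod (xs (r n)) \<le> m + 1/Suc n" for n
    proof -
      have "n \<le> r n" using r by (rule seq_suble)
      then have "1/real (Suc (r n)) \<le> 1/Suc n" by (intro divide_left_mono) auto
      then show ?thesis using xs(2)[of "r n"] by linarith
    qed
    then show "\<forall>\<^sub>F n in sequentially. cmod (xs (r n)) \<le> m + 1/Suc n" by auto
    have "(\<lambda>n. 1 / real (Suc n)) \<longlonglongrightarrow> 0" by (rule LIMSEQ_inverse_real_of_nat[unfolded inverse_eq_divide])
    then show "(\<lambda>n. m + 1/Suc n) \<longlonglongrightarrow> m" using tendsto_add[of "\<lambda>n. m" m sequentially] by fastforce
  qed auto
  have xm: "cmod x = m" by (rule LIMSEQ_unique[OF tendsto_norm[OF xr] nm])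
  have f0x: "f0 = Pop x l"
  proof
    fix z
    show "f0 z = Pop x l z"
    proof (cases "z \<in> ball 0 1")
      case False
      then show ?thesis using fs(2)[of 0] by (simp add: Pop_def)
    next
      case True
      have eq: "f0 z = fs (r n) (xs (r n) * z)" for n using fs(2)[of "r n"] True by (simp add: Pop_def)
      define K where "K = cball (0::complex) (cmod z)"
      have K: "compact K" "K \<subseteq> ball 0 1" using True by (auto simp: K_def)
      have inK: "xs n * z \<in> K" for n using xs1[of n]
        by (auto simp: K_def norm_mult mult_left_le_one_le)
      have t1: "(\<lambda>n. fs (r n) (xs (r n) * z) - l (xs (r n) * z)) \<longlonglongrightarrow> 0"
        unfolding tendsto_iff
      proof (intro allI impI)
        fix e :: real assume "0 < e"
        then have "\<forall>\<^sub>F n in sequentially. \<forall>y\<in>K. dist (fs (r n) y) (l y) < e"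
          using U[OF K] by (auto simp: uniform_limit_iff)
        then show "\<forall>\<^sub>F n in sequentially. dist (fs (r n) (xs (r n) * z) - l (xs (r n) * z)) 0 < e"
          by eventually_elim (use inK in \<open>auto simp: dist_norm\<close>)
      qed
      have xz: "x * z \<in> ball 0 1" using x(1) True mult_ball by auto
      have "continuous_on (ball 0 1) l" by (rule holomorphic_on_imp_continuous_on[OF lhol])
      then have ic: "isCont l (x * z)" using xz by (simp add: continuous_on_eq_continuous_at)
      have "(\<lambda>n. xs (r n) * z) \<longlonglongrightarrow> x * z" by (intro tendsto_intros xr)
      from isCont_tendsto_compose[OF ic this]
      have t2: "(\<lambda>n. l (xs (r n) * z)) \<longlonglongrightarrow> l (x * z)" .
      have "(\<lambda>n. fs (r n) (xs (r n) * z)) \<longlonglongrightarrow> 0 + l (x * z)"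
        using tendsto_add[OF t1 t2] by simp
      moreover have "(\<lambda>n. fs (r n) (xs (r n) * z)) = (\<lambda>n. f0 z)" using eq by auto
      ultimately have "(\<lambda>n. f0 z) \<longlonglongrightarrow> l (x * z)" by simp
      then have "f0 z = l (x * z)" by (simp add: LIMSEQ_const_iff)
      then show ?thesis using True by (simp add: Pop_def)
    qed
  qed
  have border: "\<forall>h\<in>V. \<forall>y\<in>cball 0 1. l = Pop y h \<longrightarrow> cmod y = 1"
  proof (intro ballI impI, rule ccontr)
    fix h y assume h: "h \<in> V" and y: "y \<in> cball 0 1" and ly: "l = Pop y h" and ny: "cmod y \<noteq> 1"
    then have y1: "cmod y < 1" by auto
    have "f0 = Pop (x * y) h" unfolding f0x ly by (rule Pop_Pop) (use x(1) in auto)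
    moreover have "cmod (x * y) \<le> 1" unfolding norm_mult using x(1) y by (intro mult_le_one) auto
    ultimately have "x * y \<in> S" using h unfolding S_def by blast
    then have "m \<le> cmod x * cmod y" using m_le[OF \<open>x * y \<in> S\<close>] by (simp add: norm_mult)
    show False
    proof (cases "x = 0")
      case True
      have "f0 = eA" using f0x Pop_0[OF lA] True by simp
      then show False using ne by simp
    next
      case False
      then have "0 < cmod x" by simp
      then have "cmod x * cmod y < cmod x" using y1 by (simp add: mult_less_cancel_left1)
      then show False using \<open>m \<le> cmod x * cmod y\<close> xm by linarith
    qed
  qed
  have "cmod x \<le> 1" using x(1) by simp
  then show ?thesis using l(1) f0x border by blast
qed

theorem theorem5:
  fixes V :: "(complex \<Rightarrow> complex) set" and g :: "complex \<Rightarrow> complex"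
  assumes "V \<subseteq> anA0" and "lu_compact V" and "complete_Ac (dualT V)"
    and "g \<in> anAc"
  shows "(\<lambda>f. hadamard f g 1) ` V = (\<Union>f\<in>bor V. hadamard f g ` cball 0 1)
    \<and> frontier ((\<lambda>f. hadamard f g 1) ` V) \<subseteq> (\<Union>f\<in>bor V. hadamard f g ` sphere 0 1)"
proof -
  note V = assms(1) and cpt = assms(2) and comp = assms(3) and g = assms(4)
  have holoV: "f holomorphic_on ball 0 1" if "f \<in> V" for f
    using that V by (auto simp: anA0_def anA_def)
  have V0: "f 0 = 1" if "f \<in> V" for f
    using that V by (auto simp: anA0_def tcoeff_0)
  define L where "L = (\<lambda>f. hadamard f g 1) ` V"
  have closedL: "closed L"
    unfolding closed_sequential_limits
  proof (intro allI impI, elim conjE)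
    fix s w assume s: "\<forall>n. s n \<in> L" "s \<longlonglongrightarrow> w"
    then have "\<forall>n. \<exists>f. f \<in> V \<and> s n = hadamard f g 1" by (auto simp: L_def)
    then obtain F where "\<forall>n. F n \<in> V \<and> s n = hadamard (F n) g 1"
      by (rule choice_iff[THEN iffD1, elim_format]) blast
    then have F: "\<And>n. F n \<in> V" "\<And>n. s n = hadamard (F n) g 1" by auto
    obtain l r where l: "l \<in> V" "strict_mono r"
      "\<And>K. compact K \<Longrightarrow> K \<subseteq> ball 0 1 \<Longrightarrow> uniform_limit K (F \<circ> r) l sequentially"
      using cpt[unfolded lu_compact_def, rule_format, of F] F(1) by auto
    have "(\<lambda>n. hadamard ((F \<circ> r) n) g 1) \<longlonglongrightarrow> hadamard l g 1"
      by (rule Lambda_cont[OF g _ holoV[OF l(1)] l(3)]) (use F(1) holoV in auto)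
    moreover have "(\<lambda>n. hadamard ((F \<circ> r) n) g 1) \<longlonglongrightarrow> w"
      using LIMSEQ_subseq_LIMSEQ[OF s(2) l(2)] F(2) by (simp add: o_def)
    ultimately have "w = hadamard l g 1" by (rule LIMSEQ_unique[rotated])
    then show "w \<in> L" using l(1) by (auto simp: L_def)
  qed
  have partA: "hadamard f g z \<in> L" if f: "f \<in> V" and z: "cmod z \<le> 1" and ne: "hadamard f g z \<noteq> g 0" for f z
  proof (rule ccontr)
    assume nL: "hadamard f g z \<notin> L"
    define w where "w = hadamard f g z"
    have wne: "w \<noteq> g 0" using ne by (simp add: w_def)
    define h where "h = (\<lambda>\<zeta>. (1/(g 0 - w)) * (g \<zeta> - w))"
    define R where "R = (SOME R. R > 1 \<and> g holomorphic_on ball 0 R)"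
    have R: "R > 1"
      using someI_ex[of "\<lambda>R. R > 1 \<and> g holomorphic_on ball 0 R"] g by (auto simp: anAc_def R_def)
    have hA: "h \<in> anAc0" and hR: "h holomorphic_on ball 0 R"
      using dual_elem(1,2)[OF g wne] by (auto simp: h_def R_def)
    have hf: "\<And>f z. f holomorphic_on ball 0 1 \<Longrightarrow> cmod z \<le> 1 \<Longrightarrow>
      hadamard f h z = (1/(g 0 - w)) * (hadamard f g z - w * f 0)"
      using dual_elem(3)[OF g wne] by (simp add: h_def)
    have c0: "1/(g 0 - w) \<noteq> 0" using wne by simp
    have "h \<in> dualT V"
      unfolding dualT_def
    proof (intro CollectI conjI ballI hA)
      fix f' assume f': "f' \<in> V"
      have "hadamard f' g 1 \<noteq> w"
      proof
        assume "hadamard f' g 1 = w"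
        then have "w \<in> L" unfolding L_def using f' by (intro image_eqI[of _ _ f']) auto
        then show False using nL by (simp add: w_def)
      qed
      then show "hadamard f' h 1 \<noteq> 0"
        using hf[OF holoV[OF f'], of 1] V0[OF f'] c0 by simp
    qed
    then have "(\<lambda>\<zeta>. h (z * \<zeta>)) \<in> dualT V"
      using comp z by (auto simp: complete_Ac_def)
    then have "hadamard f (\<lambda>\<zeta>. h (z * \<zeta>)) 1 \<noteq> 0" using f by (auto simp: dualT_def)
    moreover have "hadamard f (\<lambda>\<zeta>. h (z * \<zeta>)) 1 = hadamard f h z"
      by (rule had_compose[OF hR _ z]) (use R in auto)
    moreover have "hadamard f h z = 0"
      using hf[OF holoV[OF f] z] V0[OF f] by (simp add: w_def)
    ultimately show False by simp
  qed
  have plus: "hadamard f g z \<in> L" if f: "f \<in> V" and z: "cmod z \<le> 1" for f z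
  proof (rule ccontr)
    assume nL: "hadamard f g z \<notin> L"
    then have w0: "hadamard f g z = g 0" using partA[OF f z] by blast
    then have g0L: "g 0 \<notin> L" using nL by simp
    define S where "S = hadamard f g ` cball 0 1"
    have cS: "connected S" unfolding S_def
      by (rule connected_continuous_image[OF had_cont(1)[OF holoV[OF f] g] connected_cball])
    have e1: "S \<subseteq> {g 0} \<union> L"
    proof
      fix y assume "y \<in> S"
      then obtain z' where z': "cmod z' \<le> 1" "y = hadamard f g z'" by (auto simp: S_def)
      then show "y \<in> {g 0} \<union> L" using partA[OF f z'(1)] by blast
    qed
    have e2: "{g 0} \<inter> S \<noteq> {}"
      using had_zero[OF holoV[OF f] g] V0[OF f] by (auto simp: S_def intro!: image_eqI[of _ _ 0])
    have e3: "L \<inter> S \<noteq> {}"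
    proof -
      have "hadamard f g 1 \<in> L" using f by (auto simp: L_def)
      then show ?thesis by (auto simp: S_def intro!: image_eqI[of _ _ 1])
    qed
    have e4: "{g 0} \<inter> L \<inter> S = {}" using g0L by auto
    have "\<exists>A B. closed A \<and> closed B \<and> S \<subseteq> A \<union> B \<and> A \<inter> B \<inter> S = {} \<and> A \<inter> S \<noteq> {} \<and> B \<inter> S \<noteq> {}"
      by (rule exI[of _ "{g 0}"], rule exI[of _ L], intro conjI closed_singleton closedL e1 e2 e3 e4)
    then show False using cS unfolding connected_closed by blast
  qed
  have borV: "bor V \<subseteq> V" by (auto simp: bor_def)
  have decomp: "\<exists>f\<in>bor V. \<exists>x. cmod x \<le> 1 \<and> f0 = Pop x f" if f0: "f0 \<in> V" for f0
  proof (cases "V = {eA}")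
    case True
    then have "f0 = eA" "bor V = {eA}" using f0 by (auto simp: bor_def)
    moreover have "Pop 1 eA = eA" using eA_anA0 Pop_1 by (auto simp: anA0_def)
    ultimately show ?thesis by (intro bexI[of _ eA] exI[of _ 1]) auto
  next
    case False
    then have bV: "bor V = {f \<in> V. \<forall>g\<in>V. \<forall>x\<in>cball 0 1. f = Pop x g \<longrightarrow> cmod x = 1}"
      by (simp add: bor_def)
    show ?thesis
    proof (cases "f0 = eA")
      case True
      then obtain f1 where f1: "f1 \<in> V" "f1 \<noteq> eA" using False f0 by blast
      obtain x f where fV: "f \<in> V" and fb: "\<forall>h\<in>V. \<forall>y\<in>cball 0 1. f = Pop y h \<longrightarrow> cmod y = 1"
        using border_exists[OF V cpt f1] by blast
      moreover have "f0 = Pop 0 f"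
      proof -
        have "f \<in> anA0" using V \<open>f \<in> V\<close> by auto
        then have "Pop 0 f = eA" by (rule Pop_0)
        then show ?thesis using True by simp
      qed
      moreover have "f \<in> bor V" unfolding bV using fV fb by blast
      moreover have "cmod (0::complex) \<le> 1" by simp
      ultimately show ?thesis by blast
    next
      case ne: False
      obtain x f where xf: "cmod x \<le> 1" "f \<in> V" "f0 = Pop x f"
          "\<forall>h\<in>V. \<forall>y\<in>cball 0 1. f = Pop y h \<longrightarrow> cmod y = 1"
        using border_exists[OF V cpt f0 ne] by blast
      have "f \<in> bor V" unfolding bV using xf(2,4) by blast
      then show ?thesis using xf(1,3) by blast
    qed
  qed
  have valPop: "hadamard f0 g 1 = hadamard f g x" if "f \<in> V" "cmod x \<le> 1" "f0 = Pop x f" for f0 f x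
    using hadamard_Pop[of f x g] that V by (auto simp: anA0_def)
  have eq: "L = (\<Union>f\<in>bor V. hadamard f g ` cball 0 1)"
  proof
    show "L \<subseteq> (\<Union>f\<in>bor V. hadamard f g ` cball 0 1)"
    proof
      fix w assume "w \<in> L"
      then obtain f0 where f0: "f0 \<in> V" "w = hadamard f0 g 1" by (auto simp: L_def)
      obtain f x where fx: "f \<in> bor V" "cmod x \<le> 1" "f0 = Pop x f" using decomp[OF f0(1)] by blast
      have fV: "f \<in> V" using borV fx(1) by blast
      have "w = hadamard f g x" using valPop[OF fV fx(2,3)] f0(2) by simp
      then have "w \<in> hadamard f g ` cball 0 1" using fx(2) by simp
      then show "w \<in> (\<Union>f\<in>bor V. hadamard f g ` cball 0 1)" using fx(1) by blast
    qed
    show "(\<Union>f\<in>bor V. hadamard f g ` cball 0 1) \<subseteq> L"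
      using plus borV by auto
  qed
  have fr: "frontier L \<subseteq> (\<Union>f\<in>bor V. hadamard f g ` sphere 0 1)"
  proof
    fix w assume wF: "w \<in> frontier L"
    then have "w \<in> L" using frontier_subset_closed[OF closedL] by blast
    then obtain f0 where f0: "f0 \<in> V" "w = hadamard f0 g 1" by (auto simp: L_def)
    obtain f x where fx: "f \<in> bor V" "cmod x \<le> 1" "f0 = Pop x f" using decomp[OF f0(1)] by blast
    have fV: "f \<in> V" using fx borV by auto
    have wx: "w = hadamard f g x" using valPop[of f x f0] fV fx f0 by auto
    show "w \<in> (\<Union>f\<in>bor V. hadamard f g ` sphere 0 1)"
    proof (cases "cmod x = 1")
      case True
      then have "w \<in> hadamard f g ` sphere 0 1" using wx by simp
      then show ?thesis using fx(1) by blast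
    next
      case False
      then have x1: "x \<in> ball 0 1" using fx by auto
      show ?thesis
      proof (cases "hadamard f g constant_on ball 0 1")
        case True
        then obtain c where c: "\<And>y. y \<in> ball 0 1 \<Longrightarrow> hadamard f g y = c"
          by (auto simp: constant_on_def)
        have "hadamard f g 1 = c"
          by (rule continuous_constant_on_closure[of "ball 0 1"])
             (use had_cont(1)[OF holoV[OF fV] g] c in auto)
        then have "w = hadamard f g 1" using c[OF x1] wx by simp
        moreover have "(1::complex) \<in> sphere 0 1" by simp
        ultimately have "w \<in> hadamard f g ` sphere 0 1" by blast
        then show ?thesis using fx(1) by blast
      next
        case nc: False
        have op: "open (hadamard f g ` ball 0 1)"
          by (rule open_mapping_thm[OF had_cont(2)[OF holoV[OF fV] g] open_ball connected_ball open_ball order.refl nc])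
        have "hadamard f g ` ball 0 1 \<subseteq> L" using plus[OF fV] by auto
        then have "hadamard f g ` ball 0 1 \<subseteq> interior L" using op interior_maximal by blast
        then have "w \<in> interior L" using x1 wx by auto
        then show ?thesis using wF by (auto simp: frontier_def)
      qed
    qed
  qed
  show ?thesis using eq fr by (simp add: L_def)
qed

end
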